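(* Let $\{r_\xi:\xi<\kappa\}\subseteq[0,1]$ be a (one-to-one) enumeration of a Luzin set, and let $f_\xi:[0,1]\setminus\{r_\xi\}\to[-1,1]$ ($\xi<\kappa$) be any splitting functions. Let $K$ be the split $[0,1]$ (unordered split interval) induced by $(f_\xi)_{\xi<\kappa}$. Then no nonmetrizable compact subspace of any continuous image of $K$ is totally disconnected.
   Context: A Luzin set is an uncountable subset of $\mathbb R$ whose intersection with every nowhere dense subset of $\mathbb R$ is countable. Split $M$ (definition), here with $M=[0,1]$ and $K_\xi=[-1,1]$: given a compact metrizable $M$ without isolated points, compact metrizable $K_\xi$ ($\xi<\kappa$), distinct points $r_\xi\in M$, and continuous $f_\xi:M\setminus\{r_\xi\}\to K_\xi$ ("splitting functions") such that $f_\xi[U\setminus\{r_\xi\}]$ is dense in $K_\xi$ for every open neighbourhood $U$ of $r_\xi$, the split $M$ induced by $(f_\xi)_{\xi<\kappa}$ is the subspace $K$ of $M^{\{*\}}\times\prod_{\xi<\kappa}K_\xi$ consisting of the points $x_{\xi,t}$ ($\xi<\kappa$, $t\in K_\xi$) with $x_{\xi,t}( * )=r_\xi$, $x_{\xi,t}(\xi)=t$, $x_{\xi,t}(\eta)=f_\eta(r_\xi)$ for $\eta\ne\xi$, and the points $x_r$ ($r\in M\setminus\{r_\xi:\xi<\kappa\}$) with $x_r( * )=r$, $x_r(\xi)=f_\xi(r)$ for all $\xi$. *)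

theory Defs
  imports "HOL-Analysis.Analysis"
begin

definition nowhere_dense_real :: "real set \<Rightarrow> bool" where
  "nowhere_dense_real N \<longleftrightarrow> interior (closure N) = {}"

definition luzin_set :: "real set \<Rightarrow> bool" where
  "luzin_set L \<longleftrightarrow> uncountable L \<and>
     (\<forall>N. nowhere_dense_real N \<longrightarrow> countable (L \<inter> N))"

definition splitting_function :: "real \<Rightarrow> (real \<Rightarrow> real) \<Rightarrow> bool" where
  "splitting_function r f \<longleftrightarrow>
     continuous_on ({0..1} - {r}) f \<and> f ` ({0..1} - {r}) \<subseteq> {-1..1} \<and>
     (\<forall>U. openin (top_of_set {0..1}) U \<and> r \<in> U \<longrightarrow>
          {-1..1} \<subseteq> closure (f ` (U - {r})))"

definition split_ambient :: "'i set \<Rightarrow> (real \<times> ('i \<Rightarrow> real)) topology" where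
  "split_ambient I = prod_topology (top_of_set {0..1})
      (product_topology (\<lambda>_. top_of_set {-1..1}) I)"

definition split_points ::
  "'i set \<Rightarrow> ('i \<Rightarrow> real) \<Rightarrow> ('i \<Rightarrow> real \<Rightarrow> real) \<Rightarrow> (real \<times> ('i \<Rightarrow> real)) set" where
  "split_points I r f =
     {(r \<xi>, \<lambda>\<eta>\<in>I. if \<eta> = \<xi> then t else f \<eta> (r \<xi>)) | \<xi> t. \<xi> \<in> I \<and> t \<in> {-1..1}}
   \<union> {(x, \<lambda>\<eta>\<in>I. f \<eta> x) | x. x \<in> {0..1} \<and> x \<notin> r ` I}"

definition split_space ::
  "'i set \<Rightarrow> ('i \<Rightarrow> real) \<Rightarrow> ('i \<Rightarrow> real \<Rightarrow> real) \<Rightarrow> (real \<times> ('i \<Rightarrow> real)) topology" where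
  "split_space I r f = subtopology (split_ambient I) (split_points I r f)"

definition totally_disconnected_space :: "'a topology \<Rightarrow> bool" where
  "totally_disconnected_space X \<longleftrightarrow>
     (\<forall>x\<in>topspace X. connected_component_of_set X x = {x})"

end

theory Submission
  imports Defs
begin


lemma compact_metrizable_second_countable:
  assumes "compact_space X" "metrizable_space X"
  shows "second_countable X"
proof -
  obtain M d where md: "Metric_space M d" and X: "X = Metric_space.mtopology M d"
    using assms(2) unfolding metrizable_space_def by blast
  interpret Metric_space M d by (rule md)
  have "mtotally_bounded M"
    using assms(1) X compact_space_eq_mcomplete_mtotally_bounded by blast
  then have "\<forall>n. \<exists>K. finite K \<and> K \<subseteq> M \<and> M \<subseteq> (\<Union>x\<in>K. mball x (1 / Suc n))"
    unfolding mtotally_bounded_def by simp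
  then obtain K where K: "\<And>n. finite (K n) \<and> K n \<subseteq> M \<and> M \<subseteq> (\<Union>x\<in>K n. mball x (1 / Suc n))"
    by metis
  define B where "B = (\<Union>n. (\<lambda>x. mball x (1 / Suc n)) ` K n)"
  have "countable B" unfolding B_def using K by (simp add: countable_finite)
  moreover have "\<forall>V\<in>B. openin X V" unfolding B_def X by auto
  moreover have "\<exists>V\<in>B. x \<in> V \<and> V \<subseteq> U" if oU: "openin X U" "x \<in> U" for U x
  proof -
    have xM: "x \<in> M" using oU X openin_subset by fastforce
    obtain e where e: "e > 0" "mball x e \<subseteq> U" using oU X openin_mtopology by metis
    obtain n where n: "1 / Suc n < e / 2"
      by (metis e(1) half_gt_zero nat_approx_posE)
    obtain k where k: "k \<in> K n" "x \<in> mball k (1 / Suc n)" using K xM by blast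
    have "mball k (1 / Suc n) \<subseteq> U"
    proof
      fix y assume y: "y \<in> mball k (1 / Suc n)"
      have "d x y \<le> d x k + d k y" using k y xM by (auto intro: triangle)
      also have "\<dots> < e" using k y n by (auto simp: commute)
      finally show "y \<in> U" using e y xM by auto
    qed
    then show ?thesis using k unfolding B_def by blast
  qed
  ultimately show ?thesis unfolding second_countable_def by blast
qed



lemma metrizable_image:
  assumes cX: "compact_space X" and mX: "metrizable_space X" and hY: "Hausdorff_space Y"
    and cf: "continuous_map X Y \<phi>" and sur: "\<phi> ` topspace X = topspace Y"
  shows "metrizable_space Y"
proof -
  have cY: "compact_space Y"
    using image_compactin[OF cX[unfolded compact_space_def] cf] sur by (simp add: compact_space_def)
  have nY: "normal_space Y" using cY hY compact_Hausdorff_or_regular_imp_normal_space by blast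
  have rY: "regular_space Y" using cY hY compact_Hausdorff_imp_regular_space by blast
  have t1Y: "t1_space Y" using hY Hausdorff_imp_t1_space by blast
  obtain B where B: "countable B" "\<forall>V\<in>B. openin X V"
    "\<And>U x. openin X U \<Longrightarrow> x \<in> U \<Longrightarrow> \<exists>V\<in>B. x \<in> V \<and> V \<subseteq> U"
    using compact_metrizable_second_countable[OF cX mX] unfolding second_countable_def by metis
  define UU where "UU = Union ` {F. finite F \<and> F \<subseteq> B}"
  have cUU: "countable UU" unfolding UU_def using B(1) countable_Collect_finite_subset by blast
  have oUU: "openin X U" if "U \<in> UU" for U using that B(2) unfolding UU_def by auto
  have cover: "\<exists>U\<in>UU. K \<subseteq> U \<and> U \<subseteq> W" if K: "compactin X K" and W: "openin X W" "K \<subseteq> W" for K W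
  proof -
    have "K \<subseteq> \<Union>{V\<in>B. V \<subseteq> W}" using B(3) W by blast
    then obtain F where "finite F" "F \<subseteq> {V\<in>B. V \<subseteq> W}" "K \<subseteq> \<Union>F"
      using K B(2) unfolding compactin_def by (metis (no_types, lifting) mem_Collect_eq)
    then show ?thesis unfolding UU_def by blast
  qed
  define Op where "Op U = topspace Y - \<phi> ` (topspace X - U)" for U
  have oOp: "openin Y (Op U)" if "U \<in> UU" for U
  proof -
    have "closedin X (topspace X - U)" using oUU[OF that] by blast
    then have "compactin X (topspace X - U)" using cX closedin_compact_space by blast
    then have "compactin Y (\<phi> ` (topspace X - U))" using cf image_compactin by blast
    then show ?thesis unfolding Op_def using hY compactin_imp_closedin by blast
  qed
  have nb: "\<exists>U\<in>UU. y \<in> Op U \<and> Op U \<subseteq> W" if W: "openin Y W" "y \<in> W" for y W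
  proof -
    have yY: "y \<in> topspace Y" using W openin_subset by blast
    have "closedin X {x \<in> topspace X. \<phi> x \<in> {y}}"
      using closedin_continuous_map_preimage[OF cf closedin_t1_singleton[OF t1Y yY]] .
    then have "compactin X {x \<in> topspace X. \<phi> x = y}" using cX closedin_compact_space by simp
    moreover have "openin X {x \<in> topspace X. \<phi> x \<in> W}"
      using openin_continuous_map_preimage[OF cf W(1)] .
    ultimately obtain U where U: "U \<in> UU" "{x \<in> topspace X. \<phi> x = y} \<subseteq> U"
        "U \<subseteq> {x \<in> topspace X. \<phi> x \<in> W}"
      using cover[of "{x \<in> topspace X. \<phi> x = y}" "{x \<in> topspace X. \<phi> x \<in> W}"] W by blast
    have "y \<in> Op U" unfolding Op_def using yY U(2) by auto
    moreover have "Op U \<subseteq> W"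
    proof
      fix z assume z: "z \<in> Op U"
      then obtain x where x: "x \<in> topspace X" "z = \<phi> x" using sur unfolding Op_def by auto
      then have "x \<in> U" using z unfolding Op_def by auto
      then show "z \<in> W" using U(3) x by auto
    qed
    ultimately show ?thesis using U(1) by blast
  qed
  define Q where "Q = {(U,V). U \<in> UU \<and> V \<in> UU \<and> disjnt (Y closure_of Op U) (topspace Y - Op V)}"
  have cQ: "countable Q"
  proof -
    have "Q \<subseteq> UU \<times> UU" unfolding Q_def by auto
    moreover have "countable (UU \<times> UU)" using cUU by simp
    ultimately show ?thesis using countable_subset by blast
  qed
  have "\<forall>q\<in>Q. \<exists>h. continuous_map Y (top_of_set {0..1::real}) h \<and>
           h ` (Y closure_of Op (fst q)) \<subseteq> {0} \<and> h ` (topspace Y - Op (snd q)) \<subseteq> {1}"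
  proof
    fix q assume q: "q \<in> Q"
    then obtain U V where UV: "q = (U,V)" "U \<in> UU" "V \<in> UU"
        "disjnt (Y closure_of Op U) (topspace Y - Op V)" unfolding Q_def by auto
    have "closedin Y (topspace Y - Op V)" using oOp[OF UV(3)] by blast
    then obtain h where "continuous_map Y (top_of_set {0..1::real}) h"
       "h ` (Y closure_of Op U) \<subseteq> {0}" "h ` (topspace Y - Op V) \<subseteq> {1}"
      using Urysohn_lemma[OF nY closedin_closure_of _ UV(4), of 0 1] by auto
    then show "\<exists>h. continuous_map Y (top_of_set {0..1::real}) h \<and>
           h ` (Y closure_of Op (fst q)) \<subseteq> {0} \<and> h ` (topspace Y - Op (snd q)) \<subseteq> {1}"
      using UV(1) by auto
  qed
  then obtain h where h: "\<And>q. q \<in> Q \<Longrightarrow> continuous_map Y (top_of_set {0..1::real}) (h q) \<and>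
           h q ` (Y closure_of Op (fst q)) \<subseteq> {0} \<and> h q ` (topspace Y - Op (snd q)) \<subseteq> {1}"
    by metis
  have sep: "\<exists>q\<in>Q. h q y \<noteq> h q z" if yz: "y \<in> topspace Y" "z \<in> topspace Y" "y \<noteq> z" for y z
  proof -
    have "openin Y (topspace Y - {z})" using closedin_t1_singleton[OF t1Y yz(2)] by blast
    then obtain V where V: "V \<in> UU" "y \<in> Op V" "Op V \<subseteq> topspace Y - {z}"
      using nb[of "topspace Y - {z}" y] yz by blast
    have "closedin Y (topspace Y - Op V)" using oOp[OF V(1)] by blast
    then obtain W1 W2 where W: "openin Y W1" "openin Y W2" "y \<in> W1" "topspace Y - Op V \<subseteq> W2" "disjnt W1 W2"
      using rY V(2) unfolding regular_space_def by (metis DiffI V(2) Diff_iff yz(1))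
    obtain U where U: "U \<in> UU" "y \<in> Op U" "Op U \<subseteq> W1" using nb W by blast
    have "Y closure_of Op U \<subseteq> Y closure_of W1" using U(3) closure_of_mono by blast
    also have "\<dots> \<subseteq> topspace Y - W2"
    proof (rule closure_of_minimal)
      show "W1 \<subseteq> topspace Y - W2" using W(1,5) openin_subset by (auto simp: disjnt_def)
      show "closedin Y (topspace Y - W2)" using W(2) by blast
    qed
    finally have "disjnt (Y closure_of Op U) (topspace Y - Op V)" using W(4) by (auto simp: disjnt_def)
    then have q: "(U,V) \<in> Q" unfolding Q_def using U V by auto
    have "y \<in> Y closure_of Op U" using closure_of_subset[OF openin_subset[OF oOp[OF U(1)]]] U(2) by blast
    then have "h (U,V) y = 0" using h[OF q] by auto
    moreover have "z \<in> topspace Y - Op V" using V yz by auto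
    then have "h (U,V) z = 1" using h[OF q] by auto
    ultimately show ?thesis using q by force
  qed
  define F where "F y = (\<lambda>q\<in>Q. h q y)" for y
  let ?T = "product_topology (\<lambda>_. top_of_set {0..1::real}) Q"
  have cF: "continuous_map Y ?T F"
    unfolding continuous_map_componentwise F_def using h by auto
  have iF: "inj_on F (topspace Y)"
  proof (rule inj_onI, rule ccontr)
    fix y z assume "y \<in> topspace Y" "z \<in> topspace Y" "F y = F z" "y \<noteq> z"
    then obtain q where "q \<in> Q" "h q y \<noteq> h q z" using sep by blast
    then show False using \<open>F y = F z\<close> unfolding F_def by (metis restrict_apply')
  qed
  have hT: "Hausdorff_space ?T"
    by (simp add: Hausdorff_space_product_topology Hausdorff_space_subtopology)
  have mT: "metrizable_space ?T"
    unfolding metrizable_space_product_topology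
    using cQ by (auto intro: countable_subset metrizable_space_subtopology metrizable_space_euclidean)
  have "embedding_map Y ?T F" using continuous_imp_embedding_map[OF cF cY hT iF] .
  then have "Y homeomorphic_space subtopology ?T (F ` topspace Y)"
    by (rule embedding_map_imp_homeomorphic_space)
  then show ?thesis
    using homeomorphic_metrizable_space metrizable_space_subtopology mT by blast
qed



locale splitloc =
  fixes I :: "'i set" and r :: "'i \<Rightarrow> real" and f :: "'i \<Rightarrow> real \<Rightarrow> real"
  assumes r_inj: "inj_on r I"
    and r_range: "r ` I \<subseteq> {0..1}"
    and frange: "\<And>\<xi>. \<xi> \<in> I \<Longrightarrow> f \<xi> ` ({0..1} - {r \<xi>}) \<subseteq> {-1..1}"
    and fcont: "\<And>\<xi>. \<xi> \<in> I \<Longrightarrow> continuous_on ({0..1} - {r \<xi>}) (f \<xi>)"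

context splitloc
begin

lemma topspace_amb: "topspace (split_ambient I) = {0..1} \<times> (Pi\<^sub>E I (\<lambda>_. {-1..1}))"
  by (simp add: split_ambient_def)

lemma charK:
  "a \<in> split_points I r f \<longleftrightarrow> fst a \<in> {0..1} \<and> snd a \<in> Pi\<^sub>E I (\<lambda>_. {-1..1}) \<and>
      (\<forall>\<eta>\<in>I. fst a \<noteq> r \<eta> \<longrightarrow> snd a \<eta> = f \<eta> (fst a))"
proof
  assume "a \<in> split_points I r f"
  then consider (sp) \<xi> t where "\<xi> \<in> I" "t \<in> {-1..1}"
      "a = (r \<xi>, \<lambda>\<eta>\<in>I. if \<eta> = \<xi> then t else f \<eta> (r \<xi>))"
    | (ns) x where "x \<in> {0..1}" "x \<notin> r ` I" "a = (x, \<lambda>\<eta>\<in>I. f \<eta> x)"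
    unfolding split_points_def by blast
  then show "fst a \<in> {0..1} \<and> snd a \<in> Pi\<^sub>E I (\<lambda>_. {-1..1}) \<and>
      (\<forall>\<eta>\<in>I. fst a \<noteq> r \<eta> \<longrightarrow> snd a \<eta> = f \<eta> (fst a))"
  proof cases
    case sp
    have rx: "r \<xi> \<in> {0..1}" using sp r_range by auto
    have "f \<eta> (r \<xi>) \<in> {-1..1}" if "\<eta> \<in> I" "\<eta> \<noteq> \<xi>" for \<eta>
    proof -
      have "r \<xi> \<noteq> r \<eta>" using r_inj sp(1) that inj_on_eq_iff by metis
      then show ?thesis using frange[OF that(1)] rx by blast
    qed
    then show ?thesis using sp rx by auto
  next
    case ns
    have "f \<eta> x \<in> {-1..1}" if "\<eta> \<in> I" for \<eta>
      using frange[OF that] ns that by blast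
    then show ?thesis using ns by auto
  qed
next
  assume a: "fst a \<in> {0..1} \<and> snd a \<in> Pi\<^sub>E I (\<lambda>_. {-1..1}) \<and>
      (\<forall>\<eta>\<in>I. fst a \<noteq> r \<eta> \<longrightarrow> snd a \<eta> = f \<eta> (fst a))"
  show "a \<in> split_points I r f"
  proof (cases "fst a \<in> r ` I")
    case True
    then obtain \<xi> where \<xi>: "\<xi> \<in> I" "fst a = r \<xi>" by blast
    have "snd a = (\<lambda>\<eta>\<in>I. if \<eta> = \<xi> then snd a \<xi> else f \<eta> (r \<xi>))"
    proof
      fix \<eta> show "snd a \<eta> = (\<lambda>\<eta>\<in>I. if \<eta> = \<xi> then snd a \<xi> else f \<eta> (r \<xi>)) \<eta>"
      proof (cases "\<eta> \<in> I")
        case True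
        then show ?thesis using a \<xi> r_inj inj_on_eq_iff by fastforce
      next
        case False
        then show ?thesis using a by (auto simp: PiE_def extensional_def)
      qed
    qed
    moreover have "snd a \<xi> \<in> {-1..1}" using a \<xi> by auto
    ultimately have "a = (r \<xi>, \<lambda>\<eta>\<in>I. if \<eta> = \<xi> then snd a \<xi> else f \<eta> (r \<xi>))"
      using \<xi> by (metis prod.collapse)
    then show ?thesis unfolding split_points_def using \<xi> \<open>snd a \<xi> \<in> {-1..1}\<close> by blast
  next
    case False
    have "snd a = (\<lambda>\<eta>\<in>I. f \<eta> (fst a))"
    proof
      fix \<eta> show "snd a \<eta> = (\<lambda>\<eta>\<in>I. f \<eta> (fst a)) \<eta>"
        using a False by (cases "\<eta> \<in> I") (auto simp: PiE_def extensional_def)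
    qed
    then have "a = (fst a, \<lambda>\<eta>\<in>I. f \<eta> (fst a))" by (metis prod.collapse)
    then show ?thesis unfolding split_points_def using a False by blast
  qed
qed

lemma K_sub: "split_points I r f \<subseteq> topspace (split_ambient I)"
proof
  fix a assume "a \<in> split_points I r f"
  then have "fst a \<in> {0..1}" "snd a \<in> Pi\<^sub>E I (\<lambda>_. {-1..1})" using charK by blast+
  then show "a \<in> topspace (split_ambient I)" by (simp add: topspace_amb mem_Times_iff)
qed

lemma topspace_split: "topspace (split_space I r f) = split_points I r f"
  using K_sub by (simp add: split_space_def Int_absorb1)

lemma cont_fst: "continuous_map (split_ambient I) euclideanreal fst"
  unfolding split_ambient_def
  by (rule continuous_map_into_fulltopology[OF continuous_map_fst])

lemma cont_coord:
  assumes "\<eta> \<in> I" shows "continuous_map (split_ambient I) euclideanreal (\<lambda>a. snd a \<eta>)"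
proof -
  have "continuous_map (split_ambient I) (top_of_set {-1..1}) ((\<lambda>x. x \<eta>) \<circ> snd)"
    unfolding split_ambient_def
    by (rule continuous_map_compose[OF continuous_map_snd continuous_map_product_projection[OF assms]])
  then have "continuous_map (split_ambient I) euclideanreal ((\<lambda>x. x \<eta>) \<circ> snd)"
    by (rule continuous_map_into_fulltopology)
  then show ?thesis by (simp add: o_def)
qed

lemma closedG:
  assumes "\<eta> \<in> I"
  shows "closed {(x,t). x \<in> {0..1} \<and> t \<in> {-1..1::real} \<and> (x = r \<eta> \<or> t = f \<eta> x)}"
  unfolding closed_sequential_limits
proof (intro allI impI, elim conjE)
  fix s :: "nat \<Rightarrow> real \<times> real" and l
  assume s: "\<forall>n. s n \<in> {(x,t). x \<in> {0..1} \<and> t \<in> {-1..1::real} \<and> (x = r \<eta> \<or> t = f \<eta> x)}"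
    and l: "s \<longlonglongrightarrow> l"
  obtain x t where lxt: "l = (x,t)" by fastforce
  have fx: "(\<lambda>n. fst (s n)) \<longlonglongrightarrow> x" using tendsto_fst[OF l] lxt by simp
  have ft: "(\<lambda>n. snd (s n)) \<longlonglongrightarrow> t" using tendsto_snd[OF l] lxt by simp
  have x01: "x \<in> {0..1}"
    by (rule Lim_in_closed_set[OF closed_atLeastAtMost _ _ fx]) (use s in \<open>auto simp: case_prod_beta\<close>)
  have t01: "t \<in> {-1..1}"
    by (rule Lim_in_closed_set[OF closed_atLeastAtMost _ _ ft]) (use s in \<open>auto simp: case_prod_beta\<close>)
  have "x = r \<eta> \<or> t = f \<eta> x"
  proof (cases "x = r \<eta>")
    case False
    have ev: "eventually (\<lambda>n. fst (s n) \<noteq> r \<eta>) sequentially"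
      using tendsto_imp_eventually_ne[OF fx False] .
    have ev2: "eventually (\<lambda>n. fst (s n) \<in> {0..1} - {r \<eta>}) sequentially"
      by (rule eventually_mono[OF ev]) (use s in \<open>auto simp: case_prod_beta\<close>)
    have lim1: "(\<lambda>n. f \<eta> (fst (s n))) \<longlonglongrightarrow> f \<eta> x"
      using continuous_on_tendsto_compose[OF fcont[OF assms] fx _ ev2] x01 False by auto
    have evq: "eventually (\<lambda>n. f \<eta> (fst (s n)) = snd (s n)) sequentially"
      by (rule eventually_mono[OF ev]) (use s in \<open>auto simp: case_prod_beta\<close>)
    have "(\<lambda>n. snd (s n)) \<longlonglongrightarrow> f \<eta> x" using tendsto_cong[OF evq, THEN iffD1, OF lim1] .
    then show ?thesis using ft LIMSEQ_unique by blast
  qed simp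
  then show "l \<in> {(x,t). x \<in> {0..1} \<and> t \<in> {-1..1::real} \<and> (x = r \<eta> \<or> t = f \<eta> x)}"
    using lxt x01 t01 by auto
qed

lemma closedK:
  assumes "I \<noteq> {}"
  shows "closedin (split_ambient I) (split_points I r f)"
proof -
  let ?G = "\<lambda>\<eta>. {(x,t). x \<in> {0..1} \<and> t \<in> {-1..1::real} \<and> (x = r \<eta> \<or> t = f \<eta> x)}"
  let ?A = "\<lambda>\<eta>. {a \<in> topspace (split_ambient I). (fst a, snd a \<eta>) \<in> ?G \<eta>}"
  have "closedin (split_ambient I) (?A \<eta>)" if "\<eta> \<in> I" for \<eta>
  proof (rule closedin_continuous_map_preimage)
    show "continuous_map (split_ambient I) euclidean (\<lambda>a. (fst a, snd a \<eta>))"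
      using continuous_map_pairedI[OF cont_fst cont_coord[OF that]] by simp
    show "closedin euclidean (?G \<eta>)" using closedG[OF that] by simp
  qed
  then have "closedin (split_ambient I) (\<Inter> (?A ` I))"
    using assms by (intro closedin_Inter) auto
  moreover have "\<Inter> (?A ` I) = split_points I r f"
  proof
    show "\<Inter> (?A ` I) \<subseteq> split_points I r f"
    proof
      fix a assume a: "a \<in> \<Inter> (?A ` I)"
      then have "a \<in> topspace (split_ambient I)" using assms by auto
      then have "fst a \<in> {0..1}" "snd a \<in> Pi\<^sub>E I (\<lambda>_. {-1..1})" by (auto simp: topspace_amb mem_Times_iff)
      moreover have "\<forall>\<eta>\<in>I. fst a \<noteq> r \<eta> \<longrightarrow> snd a \<eta> = f \<eta> (fst a)" using a by auto
      ultimately show "a \<in> split_points I r f" using charK by blast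
    qed
    show "split_points I r f \<subseteq> \<Inter> (?A ` I)"
    proof
      fix a assume a: "a \<in> split_points I r f"
      then have "fst a \<in> {0..1}" "snd a \<in> Pi\<^sub>E I (\<lambda>_. {-1..1})"
        "\<forall>\<eta>\<in>I. fst a \<noteq> r \<eta> \<longrightarrow> snd a \<eta> = f \<eta> (fst a)" using charK by blast+
      moreover have "a \<in> topspace (split_ambient I)" using a K_sub by blast
      ultimately show "a \<in> \<Inter> (?A ` I)" by (auto simp: PiE_iff)
    qed
  qed
  ultimately show ?thesis by simp
qed

lemma compact_amb: "compact_space (split_ambient I)"
  unfolding split_ambient_def
  by (simp add: compact_space_prod_topology compact_space_product_topology compact_space_subtopology)


lemma fiber_in:
  assumes L: "closedin (split_ambient I) L" "L \<subseteq> split_points I r f"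
    and \<xi>: "\<xi> \<in> I"
    and sp: "\<forall>U. openin (top_of_set {0..1}) U \<and> r \<xi> \<in> U \<longrightarrow> {-1..1} \<subseteq> closure (f \<xi> ` (U - {r \<xi>}))"
    and int: "r \<xi> \<in> interior (fst ` L)" and t: "t \<in> {-1..1}"
  shows "(r \<xi>, \<lambda>\<eta>\<in>I. if \<eta> = \<xi> then t else f \<eta> (r \<xi>)) \<in> L"
proof (rule ccontr)
  define z where "z = (r \<xi>, \<lambda>\<eta>\<in>I. if \<eta> = \<xi> then t else f \<eta> (r \<xi>))"
  assume "(r \<xi>, \<lambda>\<eta>\<in>I. if \<eta> = \<xi> then t else f \<eta> (r \<xi>)) \<notin> L"
  then have zL: "z \<notin> L" unfolding z_def .
  have zK: "z \<in> split_points I r f" unfolding z_def split_points_def using \<xi> t by blast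
  have oc: "openin (prod_topology (top_of_set {0..1}) (product_topology (\<lambda>_. top_of_set {-1..1}) I))
      (topspace (split_ambient I) - L)" using L(1) unfolding split_ambient_def by blast
  have zmem: "(fst z, snd z) \<in> topspace (split_ambient I) - L" using zK zL K_sub by auto
  from oc have H: "\<forall>x y. (x,y) \<in> topspace (split_ambient I) - L \<longrightarrow>
      (\<exists>U V. openin (top_of_set {0..1}) U \<and> openin (product_topology (\<lambda>_. top_of_set {-1..1}) I) V
         \<and> x \<in> U \<and> y \<in> V \<and> U \<times> V \<subseteq> topspace (split_ambient I) - L)"
    by (simp only: openin_prod_topology_alt)
  from H[rule_format, OF zmem] obtain U V where UV: "openin (top_of_set {0..1}) U"
      "openin (product_topology (\<lambda>_. top_of_set {-1..1}) I) V"
      "fst z \<in> U" "snd z \<in> V" "U \<times> V \<subseteq> topspace (split_ambient I) - L"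
    by blast
  from UV(2) have H2: "\<forall>x \<in> V. \<exists>U. finite {i \<in> I. U i \<noteq> topspace (top_of_set {-1..1::real})} \<and>
                 (\<forall>i \<in> I. openin (top_of_set {-1..1}) (U i)) \<and> x \<in> Pi\<^sub>E I U \<and> Pi\<^sub>E I U \<subseteq> V"
    by (simp only: openin_product_topology_alt)
  from H2[rule_format, OF UV(4)] obtain W where W: "finite {i \<in> I. W i \<noteq> topspace (top_of_set {-1..1::real})}"
      "\<forall>i\<in>I. openin (top_of_set {-1..1}) (W i)" "snd z \<in> Pi\<^sub>E I W" "Pi\<^sub>E I W \<subseteq> V"
    by blast
  define Fs where "Fs = {i \<in> I. W i \<noteq> {-1..1}} - {\<xi>}"
  have fFs: "finite Fs" using W(1) unfolding Fs_def by simp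
  define P where "P \<eta> = {x \<in> {0..1} - {r \<eta>}. f \<eta> x \<in> W \<eta>}" for \<eta>
  have oP: "openin (top_of_set {0..1}) (P \<eta>)" if "\<eta> \<in> I" for \<eta>
  proof -
    have "continuous_map (top_of_set ({0..1} - {r \<eta>})) (top_of_set {-1..1}) (f \<eta>)"
      using fcont[OF that] frange[OF that] by auto
    then have "openin (top_of_set ({0..1} - {r \<eta>})) {x \<in> topspace (top_of_set ({0..1} - {r \<eta>})). f \<eta> x \<in> W \<eta>}"
      using openin_continuous_map_preimage W(2) that by blast
    then have "openin (top_of_set ({0..1} - {r \<eta>})) (P \<eta>)" unfolding P_def by simp
    moreover have "openin (top_of_set {0..1}) ({0..1} - {r \<eta>})"
      by (rule openin_delete) simp
    ultimately show ?thesis using openin_trans by blast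
  qed
  define N where "N = U \<inter> ({0..1} \<inter> interior (fst ` L)) \<inter> ((\<Inter>\<eta>\<in>Fs. P \<eta>) \<inter> topspace (top_of_set {0..1::real}))"
  have h1: "openin (top_of_set {0..1}) ({0..1} \<inter> interior (fst ` L))" by auto
  have h2: "openin (top_of_set {0..1}) ((\<Inter>\<eta>\<in>Fs. P \<eta>) \<inter> topspace (top_of_set {0..1::real}))"
    using fFs oP unfolding Fs_def by (intro openin_INT) auto
  have oN: "openin (top_of_set {0..1}) N"
    unfolding N_def by (rule openin_Int[OF openin_Int[OF UV(1) h1] h2])
  have r01: "r \<xi> \<in> {0..1}" using r_range \<xi> by auto
  have rN: "r \<xi> \<in> N"
  proof -
    have "r \<xi> \<in> P \<eta>" if "\<eta> \<in> Fs" for \<eta>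
    proof -
      have \<eta>: "\<eta> \<in> I" "\<eta> \<noteq> \<xi>" using that unfolding Fs_def by auto
      then have "r \<xi> \<noteq> r \<eta>" using r_inj \<xi> inj_on_eq_iff by metis
      moreover have "snd z \<eta> \<in> W \<eta>" using W(3) \<eta> by auto
      ultimately show ?thesis unfolding P_def z_def using r01 \<eta> by auto
    qed
    then show ?thesis unfolding N_def using UV(3) int r01 unfolding z_def by auto
  qed
  have "t \<in> closure (f \<xi> ` (N - {r \<xi>}))" using sp oN rN t by blast
  obtain Ob where Ob: "open Ob" "W \<xi> = {-1..1} \<inter> Ob" using W(2) \<xi> openin_open by metis
  have "snd z \<xi> \<in> W \<xi>" using W(3) \<xi> by (simp add: PiE_iff)
  then have tW: "t \<in> W \<xi>" unfolding z_def using \<xi> by simp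
  then have "Ob \<inter> closure (f \<xi> ` (N - {r \<xi>})) \<noteq> {}"
    using Ob \<open>t \<in> closure (f \<xi> ` (N - {r \<xi>}))\<close> by blast
  then have "Ob \<inter> f \<xi> ` (N - {r \<xi>}) \<noteq> {}" using open_Int_closure_eq_empty[OF Ob(1)] by blast
  then obtain x where x: "x \<in> N" "x \<noteq> r \<xi>" "f \<xi> x \<in> Ob" by blast
  have x01: "x \<in> {0..1}" using x(1) unfolding N_def by auto
  have "f \<xi> x \<in> {-1..1}" using frange[OF \<xi>] x01 x(2) by blast
  then have fxW: "f \<xi> x \<in> W \<xi>" using Ob x by auto
  have "x \<in> fst ` L" using x(1) interior_subset unfolding N_def by blast
  then obtain a where a: "a \<in> L" "fst a = x" by blast
  have aK: "fst a \<in> {0..1}" "snd a \<in> Pi\<^sub>E I (\<lambda>_. {-1..1})"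
      "\<forall>\<eta>\<in>I. fst a \<noteq> r \<eta> \<longrightarrow> snd a \<eta> = f \<eta> (fst a)"
    using a(1) L(2) charK by blast+
  have "snd a \<in> Pi\<^sub>E I W"
  proof (rule PiE_I)
    fix i assume i: "i \<in> I"
    show "snd a i \<in> W i"
    proof (cases "i = \<xi>")
      case True then show ?thesis using aK(3) a(2) x(2) fxW i by auto
    next
      case False
      show ?thesis
      proof (cases "i \<in> Fs")
        case True
        then have "x \<in> P i" using x(1) unfolding N_def by auto
        then show ?thesis using aK(3) a(2) i unfolding P_def by auto
      next
        case False
        then have "W i = {-1..1}" using \<open>i \<noteq> \<xi>\<close> i unfolding Fs_def by auto
        then show ?thesis using aK(2) i by auto
      qed
    qed
  next
    fix i assume "i \<notin> I" then show "snd a i = undefined" using aK(2) by auto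
  qed
  then have "a \<in> U \<times> V" using W(4) x(1) a(2) unfolding N_def by (auto simp: mem_Times_iff)
  then show False using UV(5) a(1) by auto
qed

lemma fiber_char:
  assumes a: "a \<in> split_points I r f" and \<xi>: "\<xi> \<in> I" and fa: "fst a = r \<xi>"
  shows "a = (r \<xi>, \<lambda>\<eta>\<in>I. if \<eta> = \<xi> then snd a \<xi> else f \<eta> (r \<xi>)) \<and> snd a \<xi> \<in> {-1..1}"
proof -
  have aK: "fst a \<in> {0..1}" "snd a \<in> Pi\<^sub>E I (\<lambda>_. {-1..1})"
      "\<forall>\<eta>\<in>I. fst a \<noteq> r \<eta> \<longrightarrow> snd a \<eta> = f \<eta> (fst a)"
    using a charK by blast+
  have "snd a = (\<lambda>\<eta>\<in>I. if \<eta> = \<xi> then snd a \<xi> else f \<eta> (r \<xi>))"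
  proof
    fix \<eta> show "snd a \<eta> = (\<lambda>\<eta>\<in>I. if \<eta> = \<xi> then snd a \<xi> else f \<eta> (r \<xi>)) \<eta>"
    proof (cases "\<eta> \<in> I")
      case True
      then show ?thesis using aK(3) fa \<xi> r_inj inj_on_eq_iff by fastforce
    next
      case False
      then show ?thesis using aK(2) by (auto simp: PiE_def extensional_def)
    qed
  qed
  then show ?thesis using fa aK(2) \<xi> by (metis PiE_mem prod.collapse)
qed

lemma cont_pt:
  assumes \<xi>: "\<xi> \<in> I"
  shows "continuous_map (top_of_set {-1..1}) (split_space I r f)
            (\<lambda>t. (r \<xi>, \<lambda>\<eta>\<in>I. if \<eta> = \<xi> then t else f \<eta> (r \<xi>)))"
proof -
  have r01: "r \<xi> \<in> {0..1}" using r_range \<xi> by auto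
  have "continuous_map (top_of_set {-1..1}) (top_of_set {0..1}) (\<lambda>t. r \<xi>)" using r01 by simp
  moreover have "continuous_map (top_of_set {-1..1}) (product_topology (\<lambda>_. top_of_set {-1..1}) I)
           (\<lambda>t. \<lambda>\<eta>\<in>I. if \<eta> = \<xi> then t else f \<eta> (r \<xi>))"
    unfolding continuous_map_componentwise
  proof (intro conjI ballI)
    show "(\<lambda>t. \<lambda>\<eta>\<in>I. if \<eta> = \<xi> then t else f \<eta> (r \<xi>)) ` topspace (top_of_set {-1..1}) \<subseteq> extensional I"
      by auto
    fix k assume k: "k \<in> I"
    show "continuous_map (top_of_set {-1..1}) (top_of_set {-1..1}) (\<lambda>t. (\<lambda>\<eta>\<in>I. if \<eta> = \<xi> then t else f \<eta> (r \<xi>)) k)"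
    proof (cases "k = \<xi>")
      case True
      then show ?thesis using k by (simp add: continuous_map_id[unfolded id_def])
    next
      case False
      have "r \<xi> \<noteq> r k" using False r_inj \<xi> k inj_on_eq_iff by metis
      then have "f k (r \<xi>) \<in> {-1..1}" using frange[OF k] r01 by blast
      then show ?thesis using k False by simp
    qed
  qed
  ultimately have "continuous_map (top_of_set {-1..1}) (split_ambient I)
            (\<lambda>t. (r \<xi>, \<lambda>\<eta>\<in>I. if \<eta> = \<xi> then t else f \<eta> (r \<xi>)))"
    unfolding split_ambient_def by (rule continuous_map_pairedI)
  moreover have "(\<lambda>t. (r \<xi>, \<lambda>\<eta>\<in>I. if \<eta> = \<xi> then t else f \<eta> (r \<xi>))) \<in> topspace (top_of_set {-1..1}) \<rightarrow> split_points I r f"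
  proof
    fix t assume "t \<in> topspace (top_of_set {-1..1::real})"
    then have "t \<in> {-1..1}" by simp
    then show "(r \<xi>, \<lambda>\<eta>\<in>I. if \<eta> = \<xi> then t else f \<eta> (r \<xi>)) \<in> split_points I r f"
      unfolding split_points_def using \<xi> by blast
  qed
  ultimately show ?thesis unfolding split_space_def continuous_map_in_subtopology by blast
qed

lemma nowhere_dense_boundary:
  assumes "closed (M::real set)" shows "nowhere_dense_real (M - interior M)"
proof -
  have c: "closure (M - interior M) = M - interior M"
    using assms by (simp add: closed_Diff closure_closed)
  have "interior (M - interior M) \<subseteq> interior M" by (simp add: interior_mono)
  moreover have "interior (M - interior M) \<subseteq> M - interior M" by (rule interior_subset)
  ultimately have "interior (M - interior M) = {}" by blast
  then show ?thesis unfolding nowhere_dense_real_def c .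
qed

end


context splitloc
begin

lemma main:
  fixes Y :: "'b topology" and g :: "real \<times> ('i \<Rightarrow> real) \<Rightarrow> 'b"
  assumes luzin: "luzin_set (r ` I)"
    and sp: "\<And>\<xi>. \<xi> \<in> I \<Longrightarrow> \<forall>U. openin (top_of_set {0..1}) U \<and> r \<xi> \<in> U \<longrightarrow> {-1..1} \<subseteq> closure (f \<xi> ` (U - {r \<xi>}))"
    and Y_haus: "Hausdorff_space Y"
    and g_cont: "continuous_map (split_space I r f) Y g"
    and g_onto: "g ` topspace (split_space I r f) = topspace Y"
    and C_compact: "compactin Y C"
    and td: "totally_disconnected_space (subtopology Y C)"
  shows "metrizable_space (subtopology Y C)"
proof -
  define K where "K = split_points I r f"
  define S where "S = split_space I r f"
  define A where "A = split_ambient I"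
  have SAK: "S = subtopology A K" unfolding S_def A_def K_def split_space_def ..
  have tS: "topspace S = K" unfolding S_def K_def using topspace_split .
  have Ine: "I \<noteq> {}" using luzin unfolding luzin_set_def by auto
  have cK: "closedin A K" unfolding A_def K_def using closedK[OF Ine] .
  have cA: "compact_space A" unfolding A_def by (rule compact_amb)
  have CY: "C \<subseteq> topspace Y" using C_compact compactin_subset_topspace by blast
  have closedC: "closedin Y C" using compactin_imp_closedin[OF Y_haus C_compact] .
  define L where "L = {a \<in> K. g a \<in> C}"
  have LK: "L \<subseteq> K" unfolding L_def by auto
  have cLS: "closedin S L"
    using closedin_continuous_map_preimage[OF g_cont closedC] unfolding L_def tS[unfolded S_def] K_def S_def .
  have cLA: "closedin A L" using closedin_trans_full[OF cLS[unfolded SAK] cK] .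
  have kLA: "compactin A L" using closedin_compact_space[OF cA cLA] .
  have kLS: "compactin S L" unfolding SAK compactin_subtopology using kLA LK by blast
  define M where "M = fst ` L"
  have "compactin euclideanreal M"
    unfolding M_def A_def using image_compactin[OF kLA[unfolded A_def] cont_fst] .
  then have closedM: "closed M" using compact_imp_closed by simp
  define J where "J = {\<xi> \<in> I. \<exists>a\<in>L. \<exists>b\<in>L. fst a = r \<xi> \<and> fst b = r \<xi> \<and> g a \<noteq> g b}"
  have JI: "J \<subseteq> I" unfolding J_def by auto
  have notint: "r \<xi> \<notin> interior M" if \<xi>J: "\<xi> \<in> J" for \<xi>
  proof
    assume int: "r \<xi> \<in> interior M"
    from \<xi>J obtain a b where ab: "\<xi> \<in> I" "a \<in> L" "b \<in> L" "fst a = r \<xi>" "fst b = r \<xi>" "g a \<noteq> g b"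
      unfolding J_def by blast
    define pt where "pt t = (r \<xi>, \<lambda>\<eta>\<in>I. if \<eta> = \<xi> then t else f \<eta> (r \<xi>))" for t
    have ptL: "pt t \<in> L" if "t \<in> {-1..1}" for t
      unfolding pt_def
      using fiber_in[OF cLA[unfolded A_def] LK[unfolded K_def] ab(1) sp[OF ab(1)] int[unfolded M_def] that] .
    have aa: "a = pt (snd a \<xi>)" "snd a \<xi> \<in> {-1..1}"
      using fiber_char[OF _ ab(1) ab(4)] ab(2) LK unfolding pt_def K_def by blast+
    have bb: "b = pt (snd b \<xi>)" "snd b \<xi> \<in> {-1..1}"
      using fiber_char[OF _ ab(1) ab(5)] ab(3) LK unfolding pt_def K_def by blast+
    have "continuous_map (top_of_set {-1..1}) Y (g \<circ> pt)"
      using continuous_map_compose[OF cont_pt[OF ab(1)] g_cont] unfolding pt_def by simp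
    moreover have "(g \<circ> pt) \<in> topspace (top_of_set {-1..1}) \<rightarrow> C"
      using ptL unfolding L_def by auto
    ultimately have "continuous_map (top_of_set {-1..1}) (subtopology Y C) (g \<circ> pt)"
      by (simp add: continuous_map_in_subtopology)
    moreover have "connectedin (top_of_set {-1..1::real}) {-1..1}"
      by (simp add: connectedin_subtopology)
    ultimately have conn: "connectedin (subtopology Y C) ((g \<circ> pt) ` {-1..1})"
      by (rule connectedin_continuous_map_image)
    have gaC: "g a \<in> topspace (subtopology Y C)" using ab(2) CY unfolding L_def by auto
    have "g a \<in> (g \<circ> pt) ` {-1..1}" using aa by (metis comp_apply imageI)
    then have "(g \<circ> pt) ` {-1..1} \<subseteq> connected_component_of_set (subtopology Y C) (g a)"
      using connected_component_of_maximal[OF conn] by blast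
    also have "\<dots> = {g a}" using td gaC unfolding totally_disconnected_space_def by blast
    finally have "g b = g a" using bb by (metis comp_apply imageI singletonD subsetD)
    then show False using ab(6) by simp
  qed
  have cJ: "countable J"
  proof -
    have "r ` J \<subseteq> r ` I \<inter> (M - interior M)"
    proof
      fix x assume "x \<in> r ` J"
      then obtain \<xi> where \<xi>: "\<xi> \<in> J" "x = r \<xi>" by blast
      then obtain a where "a \<in> L" "fst a = r \<xi>" unfolding J_def by blast
      then have "r \<xi> \<in> M" unfolding M_def by (metis imageI)
      then show "x \<in> r ` I \<inter> (M - interior M)" using \<xi> JI notint by blast
    qed
    moreover have "countable (r ` I \<inter> (M - interior M))"
      using luzin nowhere_dense_boundary[OF closedM] unfolding luzin_set_def by blast
    ultimately have "countable (r ` J)" using countable_subset by blast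
    then show ?thesis using countable_image_inj_on inj_on_subset[OF r_inj JI] by blast
  qed
  have factor: "g a = g b" if ab: "a \<in> L" "b \<in> L" "fst a = fst b" "restrict (snd a) J = restrict (snd b) J" for a b
  proof (cases "fst a \<in> r ` I")
    case False
    have aK: "snd a \<in> Pi\<^sub>E I (\<lambda>_. {-1..1})" "\<forall>\<eta>\<in>I. fst a \<noteq> r \<eta> \<longrightarrow> snd a \<eta> = f \<eta> (fst a)"
      using ab(1) LK charK unfolding K_def by blast+
    have bK: "snd b \<in> Pi\<^sub>E I (\<lambda>_. {-1..1})" "\<forall>\<eta>\<in>I. fst b \<noteq> r \<eta> \<longrightarrow> snd b \<eta> = f \<eta> (fst b)"
      using ab(2) LK charK unfolding K_def by blast+
    have "snd a = snd b"
    proof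
      fix \<eta> show "snd a \<eta> = snd b \<eta>"
      proof (cases "\<eta> \<in> I")
        case True
        then have "fst a \<noteq> r \<eta>" using False by blast
        then show ?thesis using aK(2) bK(2) ab(3) True by simp
      next
        case False
        then show ?thesis using aK(1) bK(1) by (auto simp: PiE_def extensional_def)
      qed
    qed
    then have "a = b" using ab(3) by (simp add: prod_eq_iff)
    then show ?thesis by simp
  next
    case True
    then obtain \<xi> where \<xi>: "\<xi> \<in> I" "fst a = r \<xi>" by blast
    show ?thesis
    proof (cases "\<xi> \<in> J")
      case False
      from False \<xi>(1) have "\<not>(\<exists>a\<in>L. \<exists>b\<in>L. fst a = r \<xi> \<and> fst b = r \<xi> \<and> g a \<noteq> g b)"
        unfolding J_def by blast
      then show ?thesis using ab(1,2,3) \<xi>(2) by metis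
    next
      case True
      have "snd a \<xi> = snd b \<xi>" using ab(4) True by (metis restrict_apply')
      have aK: "a \<in> split_points I r f" using ab(1) LK K_def by blast
      have bK: "b \<in> split_points I r f" using ab(2) LK K_def by blast
      have fb: "fst b = r \<xi>" using ab(3) \<xi>(2) by simp
      have "a = (r \<xi>, \<lambda>\<eta>\<in>I. if \<eta> = \<xi> then snd a \<xi> else f \<eta> (r \<xi>))"
        using fiber_char[OF aK \<xi>(1) \<xi>(2)] by blast
      moreover have "b = (r \<xi>, \<lambda>\<eta>\<in>I. if \<eta> = \<xi> then snd b \<xi> else f \<eta> (r \<xi>))"
        using fiber_char[OF bK \<xi>(1) fb] by blast
      moreover note \<open>snd a \<xi> = snd b \<xi>\<close>
      ultimately have "a = b" by metis
      then show ?thesis by simp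
    qed
  qed
  define Z where "Z = prod_topology (top_of_set {0..1::real}) (product_topology (\<lambda>_. top_of_set {-1..1::real}) J)"
  define p where "p a = (fst a, restrict (snd a) J)" for a :: "real \<times> ('i \<Rightarrow> real)"
  have c2: "continuous_map (split_ambient I) (product_topology (\<lambda>_. top_of_set {-1..1::real}) J)
              (\<lambda>a. restrict (snd a) J)"
    unfolding continuous_map_componentwise
  proof (intro conjI ballI)
    show "(\<lambda>a. restrict (snd a) J) ` topspace (split_ambient I) \<subseteq> extensional J" by auto
    fix k assume k: "k \<in> J"
    have "continuous_map (split_ambient I) (top_of_set {-1..1}) ((\<lambda>x. x k) \<circ> snd)"
      unfolding split_ambient_def
      by (rule continuous_map_compose[OF continuous_map_snd continuous_map_product_projection]) (use k JI in auto)
    then show "continuous_map (split_ambient I) (top_of_set {-1..1}) (\<lambda>a. restrict (snd a) J k)"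
      using k by (simp add: o_def)
  qed
  have c1: "continuous_map (split_ambient I) (top_of_set {0..1::real}) fst"
    unfolding split_ambient_def by (rule continuous_map_fst)
  have cpA: "continuous_map A Z p"
    unfolding Z_def p_def A_def using continuous_map_pairedI[OF c1 c2] .
  have cpS: "continuous_map S Z p" unfolding SAK by (rule continuous_map_from_subtopology[OF cpA])
  define P where "P = p ` L"
  have kP: "compactin Z P" unfolding P_def using image_compactin[OF kLS cpS] .
  have hZ: "Hausdorff_space Z" unfolding Z_def
    by (simp add: Hausdorff_space_prod_topology Hausdorff_space_product_topology Hausdorff_space_subtopology)
  have mZ: "metrizable_space Z" unfolding Z_def metrizable_space_prod_topology metrizable_space_product_topology
    using cJ by (auto intro: countable_subset metrizable_space_subtopology metrizable_space_euclidean)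
  define X' where "X' = subtopology Z P"
  have cX': "compact_space X'" unfolding X'_def using compact_space_subtopology[OF kP] .
  have mX': "metrizable_space X'" unfolding X'_def using metrizable_space_subtopology[OF mZ] .
  have tX': "topspace X' = P" unfolding X'_def using compactin_subset_topspace[OF kP] by auto
  define \<phi> where "\<phi> z = g (SOME a. a \<in> L \<and> p a = z)" for z
  have \<phi>p: "\<phi> (p a) = g a" if aL: "a \<in> L" for a
  proof -
    define a' where "a' = (SOME a'. a' \<in> L \<and> p a' = p a)"
    have "\<exists>a'. a' \<in> L \<and> p a' = p a" using aL by blast
    then have ex: "a' \<in> L \<and> p a' = p a" unfolding a'_def by (rule someI_ex)
    then have "fst a' = fst a" "restrict (snd a') J = restrict (snd a) J" unfolding p_def by auto
    then have "g a' = g a" using factor ex aL by blast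
    then show ?thesis unfolding \<phi>_def a'_def .
  qed
  have tYC: "topspace (subtopology Y C) = C" using CY by auto
  have cphi: "continuous_map X' (subtopology Y C) \<phi>"
    unfolding continuous_map_closedin
  proof (intro conjI allI impI)
    show "\<phi> \<in> topspace X' \<rightarrow> topspace (subtopology Y C)"
    proof
      fix z assume "z \<in> topspace X'"
      then obtain a where a: "a \<in> L" "z = p a" using tX' P_def by auto
      then show "\<phi> z \<in> topspace (subtopology Y C)" using \<phi>p tYC L_def by auto
    qed
    fix F assume F: "closedin (subtopology Y C) F"
    have FY: "closedin Y F" using closedin_trans_full[OF F closedC] .
    have FC: "F \<subseteq> C" using closedin_subset[OF F] tYC by auto
    define LF where "LF = {a \<in> K. g a \<in> F}"
    have LFK: "LF \<subseteq> K" unfolding LF_def by auto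
    have "closedin S LF"
      using closedin_continuous_map_preimage[OF g_cont FY] unfolding LF_def tS[unfolded S_def] K_def S_def .
    then have "closedin A LF" using closedin_trans_full[OF _ cK] SAK by metis
    then have "compactin A LF" using closedin_compact_space[OF cA] by blast
    then have "compactin S LF" unfolding SAK compactin_subtopology using LFK by blast
    then have "compactin Z (p ` LF)" using image_compactin[OF _ cpS] by blast
    then have cZ: "closedin Z (p ` LF)" using compactin_imp_closedin[OF hZ] by blast
    have LFL: "LF \<subseteq> L" using FC unfolding LF_def L_def by auto
    have eq: "{z \<in> topspace X'. \<phi> z \<in> F} = p ` LF"
    proof
      show "{z \<in> topspace X'. \<phi> z \<in> F} \<subseteq> p ` LF"
      proof
        fix z assume z: "z \<in> {z \<in> topspace X'. \<phi> z \<in> F}"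
        then obtain a where a: "a \<in> L" "z = p a" using tX' P_def by auto
        then have "g a \<in> F" using z \<phi>p by auto
        then have "a \<in> LF" using a LK unfolding LF_def by auto
        then show "z \<in> p ` LF" using a by blast
      qed
      show "p ` LF \<subseteq> {z \<in> topspace X'. \<phi> z \<in> F}"
      proof
        fix z assume "z \<in> p ` LF"
        then obtain a where a: "a \<in> LF" "z = p a" by blast
        then have "a \<in> L" using LFL by blast
        then show "z \<in> {z \<in> topspace X'. \<phi> z \<in> F}" using a \<phi>p tX' P_def LF_def by auto
      qed
    qed
    have "p ` LF \<subseteq> P" unfolding P_def using LFL by (rule image_mono)
    then show "closedin X' {z \<in> topspace X'. \<phi> z \<in> F}"
      unfolding eq unfolding X'_def by (rule closedin_subset_topspace[OF cZ])
  qed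
  have sur: "\<phi> ` topspace X' = topspace (subtopology Y C)"
  proof
    show "\<phi> ` topspace X' \<subseteq> topspace (subtopology Y C)"
      using cphi continuous_map_image_subset_topspace by blast
    show "topspace (subtopology Y C) \<subseteq> \<phi> ` topspace X'"
    proof
      fix c assume "c \<in> topspace (subtopology Y C)"
      then have c: "c \<in> C" using tYC by simp
      then have "c \<in> g ` K" using CY g_onto tS unfolding S_def by auto
      then obtain a where a: "a \<in> K" "c = g a" by blast
      then have "a \<in> L" using c unfolding L_def by auto
      then show "c \<in> \<phi> ` topspace X'" using a \<phi>p tX' P_def by (metis imageI)
    qed
  qed
  have "Hausdorff_space (subtopology Y C)" using Hausdorff_space_subtopology[OF Y_haus] .
  then show ?thesis using metrizable_image[OF cX' mX' _ cphi sur] by blast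
qed

end

theorem theorem4p3:
  fixes I :: "'i set" and r :: "'i \<Rightarrow> real" and f :: "'i \<Rightarrow> real \<Rightarrow> real"
    and Y :: "'b topology" and g :: "real \<times> ('i \<Rightarrow> real) \<Rightarrow> 'b"
  assumes r_inj: "inj_on r I"
    and r_range: "r ` I \<subseteq> {0..1}"
    and luzin: "luzin_set (r ` I)"
    and split: "\<And>\<xi>. \<xi> \<in> I \<Longrightarrow> splitting_function (r \<xi>) (f \<xi>)"
    and Y_haus: "Hausdorff_space Y"
    and g_cont: "continuous_map (split_space I r f) Y g"
    and g_onto: "g ` topspace (split_space I r f) = topspace Y"
    and C_compact: "compactin Y C"
    and C_nonmetr: "\<not> metrizable_space (subtopology Y C)"
  shows "\<not> totally_disconnected_space (subtopology Y C)"
proof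
  assume td: "totally_disconnected_space (subtopology Y C)"
  have loc: "splitloc I r f"
  proof
    show "inj_on r I" by (rule r_inj)
    show "r ` I \<subseteq> {0..1}" by (rule r_range)
    fix \<xi> assume "\<xi> \<in> I"
    then show "f \<xi> ` ({0..1} - {r \<xi>}) \<subseteq> {-1..1}" "continuous_on ({0..1} - {r \<xi>}) (f \<xi>)"
      using split unfolding splitting_function_def by blast+
  qed
  have sp: "\<And>\<xi>. \<xi> \<in> I \<Longrightarrow> \<forall>U. openin (top_of_set {0..1}) U \<and> r \<xi> \<in> U \<longrightarrow> {-1..1} \<subseteq> closure (f \<xi> ` (U - {r \<xi>}))"
    using split unfolding splitting_function_def by blast
  have "metrizable_space (subtopology Y C)"
    by (rule splitloc.main[OF loc luzin sp Y_haus g_cont g_onto C_compact td])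
  then show False using C_nonmetr by contradiction
qed

end
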